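(* Let $(\mathbb X,S)$ be the subshift generated by a primitive substitution $\vartheta$ on a finite alphabet $\mathcal A$, let $(\mathbb X',S')$ be a $p$-periodic subshift over a finite alphabet, let $T=S\times S'$ on $\mathbb X\times\mathbb X'$, let $\rho$ be a $T$-ergodic Borel probability measure on $\mathbb X\times\mathbb X'$, and let $f:\mathbb X\times\mathbb X'\to\mathbb R$ be locally constant, i.e. $f(x,x')=g(x_n\cdots x_{n+k-1},x')$ for some $n\in\mathbb Z$, $k\in\mathbb N$, $g$. Assume there is a word $u\in\mathcal L(\mathbb X)$ with $\operatorname{ind}(u)>3$ such that $p$ divides $|\vartheta^n(u)|$ for infinitely many $n$. Then for $\rho$-almost every $\omega\in\mathbb X\times\mathbb X'$, the operator $H_\omega=\Delta+V_\omega$, $V_\omega(j)=f(T^j\omega)$, has no eigenvalues.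
   Context: $\Delta$ is the discrete Laplacian $(\Delta\psi)(n)=\psi(n+1)+\psi(n-1)$. The subshift of a substitution $\vartheta:\mathcal A\to\mathcal A^+$ is $\mathbb X_\vartheta=\{x\in\mathcal A^{\mathbb Z}:$ every finite subword of $x$ is a subword of some $\vartheta^m(a)$, $m\in\mathbb N$, $a\in\mathcal A\}$; $\vartheta$ is primitive if some power $\vartheta^N$ maps every letter to a word containing every letter. A $p$-periodic subshift is the set of translates of one $p$-periodic sequence. $\mathcal L(\mathbb X)$ is the set of finite words occurring in $\mathbb X$. For a word $u$ and $r=n+\ell/|u|$ with $n\in\mathbb Z_+$, $0\le\ell<|u|$, $u^r=u^nu_1\cdots u_\ell$; $\operatorname{ind}(u)=\sup\{r\in\frac1{|u|}\mathbb Z_+:u^r\in\mathcal L(\mathbb X)\}$. *)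

theory Defs
  imports "HOL-Probability.Probability" "HOL-Library.Sublist"
begin

definition subst_word :: "('a \<Rightarrow> 'a list) \<Rightarrow> 'a list \<Rightarrow> 'a list" where
  "subst_word \<theta> w = concat (map \<theta> w)"

definition subst_pow :: "('a \<Rightarrow> 'a list) \<Rightarrow> nat \<Rightarrow> 'a list \<Rightarrow> 'a list" where
  "subst_pow \<theta> m = (subst_word \<theta> ^^ m)"

definition is_substitution :: "('a \<Rightarrow> 'a list) \<Rightarrow> bool" where
  "is_substitution \<theta> \<longleftrightarrow> (\<forall>a. \<theta> a \<noteq> [])"

definition primitive_subst :: "('a \<Rightarrow> 'a list) \<Rightarrow> bool" where
  "primitive_subst \<theta> \<longleftrightarrow> (\<exists>N>0. \<forall>a b. b \<in> set (subst_pow \<theta> N [a]))"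

(* the finite window x_i ... x_j (empty if j < i) *)
definition window :: "(int \<Rightarrow> 'a) \<Rightarrow> int \<Rightarrow> int \<Rightarrow> 'a list" where
  "window x i j = map x [i..j]"

definition subst_subshift :: "('a \<Rightarrow> 'a list) \<Rightarrow> (int \<Rightarrow> 'a) set" where
  "subst_subshift \<theta> = {x. \<forall>i j. \<exists>m a. sublist (window x i j) (subst_pow \<theta> m [a])}"

definition shiftZ :: "int \<Rightarrow> (int \<Rightarrow> 'a) \<Rightarrow> (int \<Rightarrow> 'a)" where
  "shiftZ j x = (\<lambda>n. x (n + j))"

definition periodic_subshift :: "nat \<Rightarrow> (int \<Rightarrow> 'b) set \<Rightarrow> bool" where
  "periodic_subshift p X' \<longleftrightarrow> p > 0 \<and>
     (\<exists>y. (\<forall>n. y (n + int p) = y n) \<and> X' = {shiftZ j y | j. True})"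

definition Tpow :: "int \<Rightarrow> (int \<Rightarrow> 'a) \<times> (int \<Rightarrow> 'b) \<Rightarrow> (int \<Rightarrow> 'a) \<times> (int \<Rightarrow> 'b)" where
  "Tpow j \<omega> = (shiftZ j (fst \<omega>), shiftZ j (snd \<omega>))"

definition lang :: "(int \<Rightarrow> 'a) set \<Rightarrow> 'a list set" where
  "lang X = {w. \<exists>x\<in>X. \<exists>i. w = window x i (i + int (length w) - 1)}"

(* u^r for r = m/|u|: the prefix of length m of uuu... *)
definition word_pow :: "'a list \<Rightarrow> nat \<Rightarrow> 'a list" where
  "word_pow u m = take m (concat (replicate (m div length u + 1) u))"

definition ind :: "(int \<Rightarrow> 'a) set \<Rightarrow> 'a list \<Rightarrow> ereal" where
  "ind X u = Sup {ereal (real m / real (length u)) | m. word_pow u m \<in> lang X}"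

(* Borel sigma-algebra of the subspace X \<times> X' of the product of discrete spaces,
   generated by the coordinate cylinder sets *)
definition cyl_sigma :: "(int \<Rightarrow> 'a) set \<Rightarrow> (int \<Rightarrow> 'b) set \<Rightarrow> ((int \<Rightarrow> 'a) \<times> (int \<Rightarrow> 'b)) set set" where
  "cyl_sigma X X' = sigma_sets (X \<times> X')
     ({{\<omega> \<in> X \<times> X'. fst \<omega> i = a} | i a. True} \<union> {{\<omega> \<in> X \<times> X'. snd \<omega> i = b} | i b. True})"

definition measure_preserving_map :: "'c measure \<Rightarrow> ('c \<Rightarrow> 'c) \<Rightarrow> bool" where
  "measure_preserving_map M T \<longleftrightarrow> T \<in> M \<rightarrow>\<^sub>M M \<and>
     (\<forall>A\<in>sets M. emeasure M (T -` A \<inter> space M) = emeasure M A)"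

definition ergodic :: "'c measure \<Rightarrow> ('c \<Rightarrow> 'c) \<Rightarrow> bool" where
  "ergodic M T \<longleftrightarrow> prob_space M \<and> measure_preserving_map M T \<and>
     (\<forall>A\<in>sets M. T -` A \<inter> space M = A \<longrightarrow> emeasure M A = 0 \<or> emeasure M A = 1)"

definition has_eigenvalue :: "(int \<Rightarrow> real) \<Rightarrow> complex \<Rightarrow> bool" where
  "has_eigenvalue V E \<longleftrightarrow> (\<exists>\<psi> :: int \<Rightarrow> complex.
      (\<lambda>n. (cmod (\<psi> n))\<^sup>2) summable_on UNIV \<and> \<psi> \<noteq> (\<lambda>_. 0) \<and>
      (\<forall>n. \<psi> (n + 1) + \<psi> (n - 1) + complex_of_real (V n) * \<psi> n = E * \<psi> n))"

end

theory Submission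
  imports Defs
begin

type_synonym m2 = "complex \<times> complex \<times> complex \<times> complex"

fun mm :: "m2 \<Rightarrow> m2 \<Rightarrow> m2" where
  "mm (a,b,c,d) (a',b',c',d') = (a*a'+b*c', a*b'+b*d', c*a'+d*c', c*b'+d*d')"
fun ma :: "m2 \<Rightarrow> complex \<times> complex \<Rightarrow> complex \<times> complex" where
  "ma (a,b,c,d) (x,y) = (a*x+b*y, c*x+d*y)"
fun mdet :: "m2 \<Rightarrow> complex" where "mdet (a,b,c,d) = a*d - b*c"
fun mtr :: "m2 \<Rightarrow> complex" where "mtr (a,b,c,d) = a + d"
fun n1 :: "complex \<times> complex \<Rightarrow> real" where "n1 (x,y) = cmod x + cmod y"

lemma ma_mm: "ma (mm M N) v = ma M (ma N v)"
  by (cases M; cases N; cases v) (simp add: algebra_simps)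
lemma mdet_mm: "mdet (mm M N) = mdet M * mdet N"
  by (cases M; cases N) (simp add: algebra_simps)
lemma cayley: "ma M (ma M v) = (mtr M * fst (ma M v) - mdet M * fst v, mtr M * snd (ma M v) - mdet M * snd v)"
  by (cases M; cases v) (simp add: algebra_simps)

lemma n1_triangle_diff: "n1 (a - c, b - d) \<le> n1 (a,b) + n1 (c,d)"
  using norm_triangle_ineq4[of a c] norm_triangle_ineq4[of b d] by simp

lemma gordon_vec:
  assumes det: "mdet M = 1" and w: "ma M w = v"
  shows "n1 v \<le> n1 (ma M v) + n1 w + n1 (ma M (ma M v))"
proof -
  obtain a b c d where M: "M = (a,b,c,d)" by (cases M) auto
  obtain x y where v: "v = (x,y)" by (cases v) auto
  obtain x' y' where wv: "w = (x',y')" by (cases w) auto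
  define t where "t = a + d"
  have dt: "a*d - b*c = 1" using det M by simp
  have e1: "a*x' + b*y' = x" "c*x'+d*y' = y" using w M v wv by auto
  have "t * x - (a*x+b*y) = (a*d-b*c)*x'" unfolding t_def by (simp add: e1[symmetric] algebra_simps)
  hence w1: "x' = t * x - (a*x+b*y)" using dt by simp
  have "t * y - (c*x+d*y) = (a*d-b*c)*y'" unfolding t_def by (simp add: e1[symmetric] algebra_simps)
  hence w2: "y' = t * y - (c*x+d*y)" using dt by simp
  define p where "p = a*x+b*y"
  define q where "q = c*x+d*y"
  have Mv: "ma M v = (p,q)" using M v p_def q_def by simp
  have "a*p+b*q = t*p - (a*d-b*c)*x" "c*p+d*q = t*q - (a*d-b*c)*y"
    unfolding p_def q_def t_def by (simp_all add: algebra_simps)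
  hence MMv: "ma M (ma M v) = (t*p - x, t*q - y)" using Mv M dt by simp
  show ?thesis
  proof (cases "cmod t \<ge> 1")
    case True
    have "n1 v \<le> cmod t * n1 v" using True by (simp add: v mult_le_cancel_right1) (smt (verit) norm_ge_zero)
    also have "\<dots> = cmod (t*x) + cmod (t*y)" by (simp add: v norm_mult algebra_simps)
    also have "\<dots> = cmod (p + x') + cmod (q + y')" by (simp add: w1 w2 p_def q_def)
    also have "\<dots> \<le> n1 (ma M v) + n1 w" using norm_triangle_ineq[of p x'] norm_triangle_ineq[of q y'] by (simp add: Mv wv)
    finally show ?thesis by (simp add: MMv) (smt (verit) norm_ge_zero)
  next
    case False
    have "n1 v = cmod (t*p - (t*p - x)) + cmod (t*q - (t*q - y))" by (simp add: v)
    also have "\<dots> \<le> (cmod (t*p) + cmod (t*p - x)) + (cmod (t*q) + cmod (t*q - y))"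
      by (intro add_mono norm_triangle_ineq4)
    also have "\<dots> = cmod t * n1 (p,q) + n1 (t*p-x, t*q-y)" by (simp add: norm_mult algebra_simps)
    also have "\<dots> \<le> n1 (p,q) + n1 (t*p-x, t*q-y)"
    proof -
      have "n1 (p,q) \<ge> 0" by simp
      thus ?thesis using False mult_right_mono[of "cmod t" 1 "n1 (p,q)"] by simp
    qed
    finally show ?thesis unfolding MMv by (simp add: Mv wv) (smt (verit) norm_ge_zero)
  qed
qed


fun tm :: "(int \<Rightarrow> complex) \<Rightarrow> int \<Rightarrow> nat \<Rightarrow> m2" where
  "tm W a 0 = (1,0,0,1)"
| "tm W a (Suc l) = mm (W (a + int l), -1, 1, 0) (tm W a l)"

lemma tm_det: "mdet (tm W a l) = 1"
  by (induction l) (simp_all add: mdet_mm)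

lemma tm_phi:
  assumes rec: "\<And>n. \<psi> (n+1) = W n * \<psi> n - \<psi> (n-1)"
  shows "(\<psi> (a + int l), \<psi> (a + int l - 1)) = ma (tm W a l) (\<psi> a, \<psi> (a - 1))"
proof (induction l)
  case 0
  then show ?case by simp
next
  case (Suc l)
  have "ma (tm W a (Suc l)) (\<psi> a, \<psi> (a - 1)) = ma (W (a + int l), -1, 1, 0) (\<psi> (a + int l), \<psi> (a + int l - 1))"
    by (simp add: ma_mm Suc.IH)
  also have "\<dots> = (\<psi> (a + int l + 1), \<psi> (a + int l))" using rec[of "a + int l"] by simp
  also have "\<dots> = (\<psi> (a + int (Suc l)), \<psi> (a + int (Suc l) - 1))" by (simp add: algebra_simps)
  finally show ?case by simp
qed

lemma tm_shift:
  assumes "\<And>i. i < l \<Longrightarrow> W (a + d + int i) = W (a + int i)"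
  shows "tm W (a + d) l = tm W a l"
  using assms by (induction l) auto

lemma l2_decay:
  fixes \<psi> :: "int \<Rightarrow> complex"
  assumes sm: "(\<lambda>n. (cmod (\<psi> n))\<^sup>2) summable_on UNIV" and e: "\<epsilon> > 0"
  shows "\<exists>N. \<forall>j. \<bar>j\<bar> \<ge> N \<longrightarrow> cmod (\<psi> j) < \<epsilon>"
proof -
  let ?f = "\<lambda>n. (cmod (\<psi> n))\<^sup>2"
  have z: "(\<lambda>n. ?f (h n)) \<longlonglongrightarrow> 0" if inj: "inj h" for h :: "nat \<Rightarrow> int"
  proof -
    have "?f summable_on range h" using summable_on_subset[OF sm] by auto
    hence "(?f \<circ> h) summable_on UNIV" using summable_on_reindex[of h UNIV ?f] inj by simp
    hence "summable (?f \<circ> h)" by (rule summable_on_imp_summable)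
    from summable_LIMSEQ_zero[OF this] show ?thesis unfolding o_def .
  qed
  have e2: "\<epsilon>\<^sup>2 > 0" using e by simp
  have "inj (\<lambda>n::nat. int n)" by (simp add: inj_on_def)
  from LIMSEQ_D[OF z[OF this] e2] obtain N1 where "\<forall>n\<ge>N1. norm (?f (int n) - 0) < \<epsilon>\<^sup>2" by blast
  hence N1: "\<And>n. n \<ge> N1 \<Longrightarrow> ?f (int n) < \<epsilon>\<^sup>2" by simp
  have "inj (\<lambda>n::nat. - int n)" by (simp add: inj_on_def)
  from LIMSEQ_D[OF z[OF this] e2] obtain N2 where "\<forall>n\<ge>N2. norm (?f (- int n) - 0) < \<epsilon>\<^sup>2" by blast
  hence N2: "\<And>n. n \<ge> N2 \<Longrightarrow> ?f (- int n) < \<epsilon>\<^sup>2" by simp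
  have sq: "cmod z < \<epsilon>" if "(cmod z)\<^sup>2 < \<epsilon>\<^sup>2" for z
    using power_less_imp_less_base[of "cmod z" 2 \<epsilon>] that e by simp
  show ?thesis
  proof (intro exI[of _ "int (N1 + N2)"] allI impI)
    fix j :: int assume j: "\<bar>j\<bar> \<ge> int (N1 + N2)"
    show "cmod (\<psi> j) < \<epsilon>"
    proof (cases "j \<ge> 0")
      case True
      define n where "n = nat j"
      have "j = int n" using True n_def by simp
      thus ?thesis using N1[of n] j sq by auto
    next
      case False
      define n where "n = nat (- j)"
      have "j = - int n" using False n_def by simp
      thus ?thesis using N2[of n] j sq by auto
    qed
  qed
qed

lemma gordon_abstract:
  fixes \<psi> :: "int \<Rightarrow> complex"
  assumes rec: "\<And>n. \<psi> (n+1) = W n * \<psi> n - \<psi> (n-1)"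
    and dec: "\<And>\<epsilon>. \<epsilon> > 0 \<Longrightarrow> \<exists>N. \<forall>j. \<bar>j\<bar> \<ge> N \<longrightarrow> cmod (\<psi> j) < \<epsilon>"
    and per: "\<And>N. \<exists>L::nat. L \<ge> N \<and> (\<forall>j. j0 - int L \<le> j \<and> j < j0 + int L \<longrightarrow> W (j + int L) = W j)"
  shows "\<psi> j0 = 0 \<and> \<psi> (j0 - 1) = 0"
proof (rule ccontr)
  assume nz: "\<not> ?thesis"
  define \<delta> where "\<delta> = n1 (\<psi> j0, \<psi> (j0 - 1))"
  have "\<delta> > 0" using nz unfolding \<delta>_def by (auto simp: add_pos_nonneg add_nonneg_pos)
  then obtain N where N: "\<And>j. \<bar>j\<bar> \<ge> N \<Longrightarrow> cmod (\<psi> j) < \<delta>/6" using dec[of "\<delta>/6"] by auto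
  obtain L :: nat where L: "L \<ge> nat (N + \<bar>j0\<bar> + 2)"
    and LP: "\<And>j. j0 - int L \<le> j \<Longrightarrow> j < j0 + int L \<Longrightarrow> W (j + int L) = W j"
    using per by blast
  define M where "M = tm W j0 L"
  have M1: "tm W (j0 + int L) L = M" unfolding M_def
  proof (rule tm_shift)
    fix i assume "i < L"
    hence "W (j0 + int i + int L) = W (j0 + int i)" by (intro LP) auto
    thus "W (j0 + int L + int i) = W (j0 + int i)" by (simp add: ac_simps)
  qed
  have M2: "tm W (j0 - int L) L = M"
  proof -
    have "tm W (j0 - int L + int L) L = tm W (j0 - int L) L"
    proof (rule tm_shift)
      fix i assume "i < L"
      hence "W (j0 - int L + int i + int L) = W (j0 - int L + int i)" by (intro LP) auto
      thus "W (j0 - int L + int L + int i) = W (j0 - int L + int i)" by (simp add: ac_simps)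
    qed
    thus ?thesis unfolding M_def by simp
  qed
  let ?P = "\<lambda>a. (\<psi> a, \<psi> (a - 1))"
  have e1: "?P (j0 + int L) = ma M (?P j0)" using tm_phi[OF rec, of j0 L] M_def by simp
  have e2: "?P (j0 + int L + int L) = ma M (?P (j0 + int L))" using tm_phi[OF rec, of "j0 + int L" L] M1 by simp
  have e3: "?P j0 = ma M (?P (j0 - int L))" using tm_phi[OF rec, of "j0 - int L" L] M2 by simp
  have g: "n1 (?P j0) \<le> n1 (ma M (?P j0)) + n1 (?P (j0 - int L)) + n1 (ma M (ma M (?P j0)))"
    by (rule gordon_vec) (use e3 tm_det M_def in auto)
  have small: "n1 (?P a) < \<delta>/3" if "\<bar>a\<bar> \<ge> N + 1" for a
  proof -
    have "\<bar>a - 1\<bar> \<ge> N" using that by linarith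
    thus ?thesis using N[of a] N[of "a-1"] that by auto
  qed
  have "n1 (?P (j0 + int L)) < \<delta>/3" using L by (intro small) auto
  moreover have "n1 (?P (j0 - int L)) < \<delta>/3" using L by (intro small) auto
  moreover have "n1 (?P (j0 + int L + int L)) < \<delta>/3" using L by (intro small) auto
  moreover have r1: "ma M (?P j0) = ?P (j0 + int L)" using e1 by simp
  moreover have r2: "ma M (?P (j0 + int L)) = ?P (j0 + int L + int L)" using e2 by simp
  moreover have "n1 (?P j0) \<le> n1 (?P (j0 + int L)) + n1 (?P (j0 - int L)) + n1 (?P (j0 + int L + int L))"
    using g by (simp only: r1 r2)
  ultimately have "n1 (?P j0) < \<delta>" by linarith
  thus False unfolding \<delta>_def by simp
qed

lemma propagate_zero:
  fixes \<psi> :: "int \<Rightarrow> complex"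
  assumes rec: "\<And>n. \<psi> (n+1) = W n * \<psi> n - \<psi> (n-1)"
    and z: "\<psi> j0 = 0" "\<psi> (j0 - 1) = 0"
  shows "\<psi> j = 0"
proof -
  have f: "\<psi> (j0 + int m) = 0 \<and> \<psi> (j0 + int m - 1) = 0" for m
  proof (induction m)
    case 0 then show ?case using z by simp
  next
    case (Suc m)
    have "\<psi> (j0 + int m + 1) = 0" using rec[of "j0 + int m"] Suc by simp
    moreover have "j0 + int (Suc m) = j0 + int m + 1" "j0 + int (Suc m) - 1 = j0 + int m" by simp_all
    ultimately show ?case using Suc by metis
  qed
  have b: "\<psi> (j0 - int m) = 0 \<and> \<psi> (j0 - int m - 1) = 0" for m
  proof (induction m)
    case 0 then show ?case using z by simp
  next
    case (Suc m)
    have "\<psi> (j0 - int m - 1 + 1) = W (j0 - int m - 1) * \<psi> (j0 - int m - 1) - \<psi> (j0 - int m - 1 - 1)"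
      by (rule rec)
    hence "\<psi> (j0 - int m - 1 - 1) = 0" using Suc by simp
    thus ?case using Suc by (simp add: algebra_simps)
  qed
  show ?thesis
  proof (cases "j \<ge> j0")
    case True
    define m where "m = nat (j - j0)"
    have "j = j0 + int m" using True m_def by simp
    thus ?thesis using f by auto
  next
    case False
    define m where "m = nat (j0 - j)"
    have "j = j0 - int m" using False m_def by simp
    thus ?thesis using b by auto
  qed
qed


lemma sp_0[simp]: "subst_pow \<theta> 0 w = w" by (simp add: subst_pow_def)
lemma sp_Suc: "subst_pow \<theta> (Suc n) w = subst_word \<theta> (subst_pow \<theta> n w)" by (simp add: subst_pow_def)
lemma sp_add: "subst_pow \<theta> (m + n) w = subst_pow \<theta> m (subst_pow \<theta> n w)"
  by (simp add: subst_pow_def funpow_add)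
lemma sw_append: "subst_word \<theta> (v @ w) = subst_word \<theta> v @ subst_word \<theta> w"
  by (simp add: subst_word_def)
lemma sp_append: "subst_pow \<theta> n (v @ w) = subst_pow \<theta> n v @ subst_pow \<theta> n w"
  by (induction n) (simp_all add: sp_Suc sw_append)
lemma sp_Nil[simp]: "subst_pow \<theta> n [] = []"
  by (induction n) (simp_all add: sp_Suc subst_word_def)
lemma sp_concat: "subst_pow \<theta> n w = concat (map (\<lambda>a. subst_pow \<theta> n [a]) w)"
proof (induction w)
  case Nil then show ?case by simp
next
  case (Cons a w)
  have "subst_pow \<theta> n (a # w) = subst_pow \<theta> n [a] @ subst_pow \<theta> n w"
    using sp_append[of \<theta> n "[a]" w] by simp
  then show ?case using Cons by simp
qed
lemma sp_len: "length (subst_pow \<theta> n w) = sum_list (map (\<lambda>a. length (subst_pow \<theta> n [a])) w)"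
  by (subst sp_concat) (simp add: length_concat o_def)
lemma sp_sublist: "sublist v w \<Longrightarrow> sublist (subst_pow \<theta> n v) (subst_pow \<theta> n w)"
  unfolding sublist_def by (metis sp_append)

lemma sum_list_bound:
  fixes f :: "'x \<Rightarrow> nat"
  shows "(\<And>x. x \<in> set xs \<Longrightarrow> f x \<le> B) \<Longrightarrow> sum_list (map f xs) \<le> length xs * B"
  by (induction xs) (auto simp: add_mono)

lemma sum_list_lower:
  fixes f :: "'x \<Rightarrow> nat"
  shows "(\<And>x. x \<in> set xs \<Longrightarrow> f x \<ge> 1) \<Longrightarrow> sum_list (map f xs) \<ge> length xs"
proof (induction xs)
  case (Cons a xs)
  then have "f a \<ge> 1" "sum_list (map f xs) \<ge> length xs" by auto
  then show ?case by simp
qed simp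

lemma sw_len_ge: "is_substitution \<theta> \<Longrightarrow> length (subst_word \<theta> w) \<ge> length w"
proof -
  assume "is_substitution \<theta>"
  hence "\<And>a. length (\<theta> a) \<ge> 1" unfolding is_substitution_def by (simp add: Suc_le_eq)
  hence "sum_list (map (\<lambda>a. length (\<theta> a)) w) \<ge> length w" by (rule sum_list_lower)
  thus ?thesis unfolding subst_word_def length_concat by (simp add: o_def)
qed

lemma sp_len_mono_Suc: "is_substitution \<theta> \<Longrightarrow> length (subst_pow \<theta> n w) \<le> length (subst_pow \<theta> (Suc n) w)"
  by (simp add: sp_Suc sw_len_ge)

lemma sp_len_mono: "is_substitution \<theta> \<Longrightarrow> n \<le> m \<Longrightarrow> length (subst_pow \<theta> n w) \<le> length (subst_pow \<theta> m w)"
proof (induction m)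
  case 0 then show ?case by simp
next
  case (Suc m)
  then show ?case using sp_len_mono_Suc[of \<theta> m w] by (cases "n = Suc m") auto
qed

lemma sp_single_pos: "is_substitution \<theta> \<Longrightarrow> length (subst_pow \<theta> n [a]) \<ge> 1"
  using sp_len_mono[of \<theta> 0 n "[a]"] by simp

lemma ratio_bound:
  fixes \<theta> :: "'a::finite \<Rightarrow> 'a list"
  assumes subst: "is_substitution \<theta>" and prim: "primitive_subst \<theta>"
  shows "\<exists>K::nat. K \<ge> 1 \<and> (\<forall>a b n. length (subst_pow \<theta> n [a]) \<le> K * length (subst_pow \<theta> n [b]))"
proof -
  obtain N where N: "N > 0" "\<And>a b. b \<in> set (subst_pow \<theta> N [a])" using prim unfolding primitive_subst_def by blast
  define K where "K = (\<Sum>c\<in>UNIV. length (subst_pow \<theta> N [c]))"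
  have Kc: "length (subst_pow \<theta> N [c]) \<le> K" for c
    unfolding K_def by (rule member_le_sum) auto
  have K1: "K \<ge> 1" using Kc[of undefined] sp_single_pos[OF subst, of N undefined] by simp
  have main: "length (subst_pow \<theta> n [a]) \<le> K * length (subst_pow \<theta> n [b])" for a b n
  proof (cases "n \<ge> N")
    case True
    then obtain m where m: "n = m + N" by (metis le_add_diff_inverse2)
    have el: "length (subst_pow \<theta> m [e]) \<le> length (subst_pow \<theta> n [b])" for e
    proof -
      have "sublist [e] (subst_pow \<theta> N [b])" using N(2)[of e b] 
        by (metis in_set_conv_decomp sublist_appendI append_Cons append_Nil)
      hence "sublist (subst_pow \<theta> m [e]) (subst_pow \<theta> m (subst_pow \<theta> N [b]))" by (rule sp_sublist)
      thus ?thesis using sublist_length_le m sp_add by metis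
    qed
    have "length (subst_pow \<theta> n [a]) = sum_list (map (\<lambda>e. length (subst_pow \<theta> m [e])) (subst_pow \<theta> N [a]))"
      using m sp_add sp_len by metis
    also have "\<dots> \<le> length (subst_pow \<theta> N [a]) * length (subst_pow \<theta> n [b])"
      by (rule sum_list_bound) (rule el)
    also have "\<dots> \<le> K * length (subst_pow \<theta> n [b])" using Kc by simp
    finally show ?thesis .
  next
    case False
    have "length (subst_pow \<theta> n [a]) \<le> length (subst_pow \<theta> N [a])" using False sp_len_mono[OF subst] by simp
    also have "\<dots> \<le> K" by (rule Kc)
    also have "\<dots> \<le> K * length (subst_pow \<theta> n [b])" using sp_single_pos[OF subst, of n b] by simp
    finally show ?thesis .
  qed
  show ?thesis using K1 main by blast
qed

lemma blocks_sublist: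
  assumes bl: "\<And>b. b \<in> set bs \<Longrightarrow> length b \<le> D" and D: "D \<ge> 1"
    and sub: "concat bs = P @ v @ S" and lv: "length v \<ge> 2 * D"
  shows "\<exists>b\<in>set bs. sublist b v"
  using bl sub
proof (induction bs arbitrary: P)
  case Nil
  then show ?case using lv D by simp
next
  case (Cons b bs)
  have eq: "b @ concat bs = P @ (v @ S)" using Cons.prems(2) by simp
  show ?case
  proof (cases "length P \<ge> length b")
    case True
    from eq True obtain P' where "P = b @ P'" "concat bs = P' @ v @ S"
      by (auto simp: append_eq_append_conv2)
    then show ?thesis using Cons.IH[of P'] Cons.prems(1) by auto
  next
    case False
    from eq False obtain b2 where b2: "b = P @ b2" "b2 @ concat bs = v @ S"
      by (auto simp: append_eq_append_conv2)
    have lb2: "length b2 < length v" using b2(1) Cons.prems(1)[of b] lv D by auto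
    from b2(2) lb2 obtain r where r: "v = b2 @ r" "concat bs = r @ S"
      by (auto simp: append_eq_append_conv2)
    have lr: "length r \<ge> D" using r(1) b2(1) Cons.prems(1)[of b] lv by auto
    show ?thesis
    proof (cases bs)
      case Nil
      then show ?thesis using r lr D by simp
    next
      case (Cons b' bs')
      have "b' @ concat bs' = r @ S" using r(2) Cons by simp
      moreover have "length b' \<le> length r" using lr Cons.prems(1) \<open>bs = b' # bs'\<close> by force
      ultimately obtain r2 where "r = b' @ r2" by (auto simp: append_eq_append_conv2)
      hence "sublist b' v" using r(1) by (auto simp: sublist_def)
      then show ?thesis using \<open>bs = b' # bs'\<close> by auto
    qed
  qed
qed

lemma window_len[simp]: "length (window x i j) = nat (j - i + 1)"
  by (simp add: window_def)
lemma window_nth: "k < nat (j - i + 1) \<Longrightarrow> window x i j ! k = x (i + int k)"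
  by (simp add: window_def)

lemma window_shift: "window (shiftZ d x) i j = window x (i + d) (j + d)"
  by (rule nth_equalityI) (auto simp: window_nth shiftZ_def algebra_simps)

lemma subshift_shift: "x \<in> subst_subshift \<theta> \<Longrightarrow> shiftZ d x \<in> subst_subshift \<theta>"
  unfolding subst_subshift_def by (simp add: window_shift)


lemma elem_sublist: "a \<in> set xs \<Longrightarrow> sublist [a] xs"
proof -
  assume "a \<in> set xs"
  then obtain ys zs where "xs = ys @ a # zs" using split_list by metis
  thus ?thesis unfolding sublist_def by (intro exI[of _ ys] exI[of _ zs]) simp
qed

lemma lang_prefix_window:
  assumes "w \<in> lang X" "k \<le> length w"
  shows "\<exists>x\<in>X. \<exists>i. window x i (i + int k - 1) = take k w"
proof -
  from assms(1) obtain x i where x: "x \<in> X" "w = window x i (i + int (length w) - 1)"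
    unfolding lang_def by blast
  have "window x i (i + int k - 1) = take k w"
  proof (rule nth_equalityI)
    show "length (window x i (i + int k - 1)) = length (take k w)" using assms(2) by simp
    fix j assume "j < length (window x i (i + int k - 1))"
    hence j: "j < k" by simp
    have "take k w ! j = w ! j" using j by simp
    also have "\<dots> = window x i (i + int (length w) - 1) ! j" using x(2) by (rule arg_cong)
    also have "\<dots> = x (i + int j)" by (rule window_nth) (use j assms(2) in simp)
    finally show "window x i (i + int k - 1) ! j = take k w ! j" using j by (simp add: window_nth)
  qed
  thus ?thesis using x(1) by blast
qed

lemma word_pow_prefix:
  assumes l: "length u > 0" and m: "m \<ge> 3 * length u + 1"
  shows "take (3 * length u + 1) (word_pow u m) = u @ u @ u @ [hd u]"
proof -
  define q where "q = m div length u + 1"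
  have q4: "q \<ge> 4"
  proof -
    have "m div length u \<ge> (3 * length u) div length u" using m div_le_mono[of "3 * length u" m "length u"] by simp
    moreover have "(3 * length u) div length u = 3" using l by simp
    ultimately show ?thesis unfolding q_def by simp
  qed
  define r where "r = q - 4"
  have r: "q = Suc (Suc (Suc (Suc r)))" using q4 r_def by simp
  have Z: "concat (replicate q u) = u @ u @ u @ u @ concat (replicate r u)" using r by simp
  obtain a us where u: "u = a # us" using l by (cases u) auto
  have "take (3 * length u + 1) (word_pow u m) = take (3 * length u + 1) (concat (replicate q u))"
    unfolding word_pow_def q_def using m by (simp add: min_def)
  also have "\<dots> = u @ u @ u @ take 1 (u @ concat (replicate r u))"
  proof -
    have tk: "take (length xs + n) (xs @ ys) = xs @ take n ys" for xs ys :: "'a list" and n by simp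
    have "3 * length u + 1 = length u + (length u + (length u + 1))" by simp
    thus ?thesis unfolding Z by (simp only: tk)
  qed
  also have "\<dots> = u @ u @ u @ [hd u]" by (simp add: u)
  finally show ?thesis .
qed

lemma cube_in_lang:
  assumes "u \<in> lang (subst_subshift \<theta>)" "ind (subst_subshift \<theta>) u > 3"
  shows "u \<noteq> [] \<and> (\<exists>m a. sublist (u @ u @ u @ [hd u]) (subst_pow \<theta> m [a]))"
proof -
  from assms(2) obtain m where m: "word_pow u m \<in> lang (subst_subshift \<theta>)"
      "3 < ereal (real m / real (length u))"
    unfolding ind_def less_Sup_iff by blast
  have l: "length u > 0" using m(2) by (cases "length u = 0") auto
  have "3 < real m / real (length u)" using m(2) by simp
  hence "3 * real (length u) < real m" using l by (simp add: field_simps)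
  hence m3: "m \<ge> 3 * length u + 1" by linarith
  have lw: "length (word_pow u m) = m"
  proof -
    have "length (concat (replicate (m div length u + 1) u)) = (m div length u + 1) * length u"
      by (simp add: length_concat sum_list_replicate)
    moreover have "(m div length u + 1) * length u \<ge> m"
    proof -
      have "m = m div length u * length u + m mod length u" by simp
      moreover have "m mod length u < length u" using l by simp
      ultimately have "m \<le> m div length u * length u + length u" by linarith
      thus ?thesis by (simp add: distrib_right)
    qed
    ultimately show ?thesis unfolding word_pow_def by simp
  qed
  have "3 * length u + 1 \<le> length (word_pow u m)" using m3 lw by simp
  from lang_prefix_window[OF m(1) this] obtain x i where x: "x \<in> subst_subshift \<theta>"
    "window x i (i + int (3 * length u + 1) - 1) = take (3 * length u + 1) (word_pow u m)"
    by blast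
  have "\<forall>i j. \<exists>m a. sublist (window x i j) (subst_pow \<theta> m [a])" using x(1) unfolding subst_subshift_def by simp
  from this[rule_format, of i "i + int (3 * length u + 1) - 1"]
  obtain m' a where "sublist (take (3 * length u + 1) (word_pow u m)) (subst_pow \<theta> m' [a])"
    unfolding x(2) by blast
  thus ?thesis using word_pow_prefix[OF l m3] l by auto
qed

lemma uniform_occ:
  assumes subst: "is_substitution \<theta>" and prim: "primitive_subst \<theta>"
    and w: "sublist w (subst_pow \<theta> m1 [a1])"
  shows "\<exists>M. \<forall>b. sublist w (subst_pow \<theta> M [b])"
proof -
  obtain N where N: "\<And>a b. b \<in> set (subst_pow \<theta> N [a])" using prim unfolding primitive_subst_def by blast
  have "sublist w (subst_pow \<theta> (m1 + N) [b])" for b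
  proof -
    have "sublist [a1] (subst_pow \<theta> N [b])" using N[of a1 b] by (rule elem_sublist)
    hence "sublist (subst_pow \<theta> m1 [a1]) (subst_pow \<theta> (m1 + N) [b])" unfolding sp_add by (rule sp_sublist)
    thus ?thesis using w sublist_order.order.trans by blast
  qed
  thus ?thesis by blast
qed

lemma growth:
  fixes \<theta> :: "'a \<Rightarrow> 'a list"
  assumes subst: "is_substitution \<theta>" and K: "K \<ge> 1" "\<And>a b n. length (subst_pow \<theta> n [a]) \<le> K * length (subst_pow \<theta> n [b])"
    and x: "x \<in> subst_subshift \<theta>"
  shows "\<exists>n0. \<forall>n\<ge>n0. \<forall>b. length (subst_pow \<theta> n [b]) \<ge> C"
proof -
  define Z where "Z = C * K"
  obtain m a where sub: "sublist (window x 0 (int Z)) (subst_pow \<theta> m [a])"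
    using x unfolding subst_subshift_def by blast
  have "length (window x 0 (int Z)) = Z + 1" by simp
  hence "C * K + 1 \<le> length (subst_pow \<theta> m [a])" using sublist_length_le[OF sub] Z_def by simp
  have "C \<le> length (subst_pow \<theta> n [b])" if "n \<ge> m" for n b
  proof -
    have "C * K + 1 \<le> K * length (subst_pow \<theta> m [b])"
      using \<open>C * K + 1 \<le> _\<close> K(2)[of m a b] by linarith
    also have "\<dots> \<le> K * length (subst_pow \<theta> n [b])" using sp_len_mono[OF subst that] by simp
    finally have fin: "C * K + 1 \<le> K * length (subst_pow \<theta> n [b])" .
    show ?thesis
    proof (rule ccontr)
      assume "\<not> C \<le> length (subst_pow \<theta> n [b])"
      hence "K * length (subst_pow \<theta> n [b]) \<le> K * C" by simp
      thus False using fin mult.commute[of C K] by linarith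
    qed
  qed
  thus ?thesis by blast
qed

lemma covering:
  assumes subst: "is_substitution \<theta>" and x: "x \<in> subst_subshift \<theta>"
    and Mw: "\<And>b. sublist w (subst_pow \<theta> M [b])"
    and Dn: "\<And>b. length (subst_pow \<theta> (n + M) [b]) \<le> D" and D1: "D \<ge> 1"
  shows "\<exists>t. s \<le> t \<and> t + int (length (subst_pow \<theta> n w)) \<le> s + 2 * int D \<and>
           (\<forall>i < length (subst_pow \<theta> n w). x (t + int i) = subst_pow \<theta> n w ! i)"
proof -
  define v where "v = window x s (s + 2 * int D - 1)"
  have lv: "length v = 2 * D" unfolding v_def by simp
  have "\<forall>i j. \<exists>m a. sublist (window x i j) (subst_pow \<theta> m [a])" using x unfolding subst_subshift_def by simp
  from this[rule_format, of s "s + 2 * int D - 1"] obtain m a where sub: "sublist v (subst_pow \<theta> m [a])"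
    unfolding v_def by blast
  have mge: "m \<ge> n + M"
  proof (rule ccontr)
    assume "\<not> ?thesis"
    hence "length (subst_pow \<theta> m [a]) \<le> D" using sp_len_mono[OF subst, of m "n + M" "[a]"] Dn[of a] by simp
    thus False using sublist_length_le[OF sub] lv D1 by simp
  qed
  then obtain r where r: "m = (n + M) + r" by (metis le_add_diff_inverse)
  have "subst_pow \<theta> m [a] = subst_pow \<theta> (n + M) (subst_pow \<theta> r [a])" unfolding r by (rule sp_add)
  also have "\<dots> = concat (map (\<lambda>c. subst_pow \<theta> (n + M) [c]) (subst_pow \<theta> r [a]))"
    by (rule sp_concat)
  finally have "subst_pow \<theta> m [a] = concat (map (\<lambda>c. subst_pow \<theta> (n + M) [c]) (subst_pow \<theta> r [a]))" .
  with sub obtain P S where PS: "concat (map (\<lambda>c. subst_pow \<theta> (n + M) [c]) (subst_pow \<theta> r [a])) = P @ v @ S"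
    unfolding sublist_def by auto
  have "\<exists>b\<in>set (map (\<lambda>c. subst_pow \<theta> (n + M) [c]) (subst_pow \<theta> r [a])). sublist b v"
    by (rule blocks_sublist[OF _ D1 PS]) (auto simp: lv Dn)
  then obtain b where b: "b \<in> set (map (\<lambda>c. subst_pow \<theta> (n + M) [c]) (subst_pow \<theta> r [a]))" "sublist b v"
    by blast
  then obtain c where c: "b = subst_pow \<theta> (n + M) [c]" by auto
  have "sublist (subst_pow \<theta> n w) b" unfolding c sp_add by (rule sp_sublist[OF Mw])
  hence "sublist (subst_pow \<theta> n w) v" using b(2) sublist_order.order.trans by blast
  then obtain P' S' where v: "v = P' @ subst_pow \<theta> n w @ S'" unfolding sublist_def by blast
  define t where "t = s + int (length P')"
  have h1: "x (t + int i) = subst_pow \<theta> n w ! i" if i: "i < length (subst_pow \<theta> n w)" for i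
  proof -
    have k: "length P' + i < 2 * D" using lv v i by simp
    have "v ! (length P' + i) = x (s + int (length P' + i))"
      unfolding v_def using k by (subst window_nth) auto
    moreover have "v ! (length P' + i) = subst_pow \<theta> n w ! i" using v i by (simp add: nth_append)
    ultimately show ?thesis unfolding t_def by (simp add: add.assoc)
  qed
  have h2: "t + int (length (subst_pow \<theta> n w)) \<le> s + 2 * int D"
    using lv v unfolding t_def by simp
  have h3: "s \<le> t" unfolding t_def by simp
  show ?thesis
  proof (intro exI[of _ t] conjI)
    show "s \<le> t" by (rule h3)
    show "t + int (length (subst_pow \<theta> n w)) \<le> s + 2 * int D" by (rule h2)
    show "\<forall>i<length (subst_pow \<theta> n w). x (t + int i) = subst_pow \<theta> n w ! i" using h1 by blast
  qed
qed


lemma per_mult: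
  assumes "\<forall>n. y (n + int p) = y n"
  shows "y (n + int (p * q)) = y n"
proof (induction q)
  case 0 then show ?case by simp
next
  case (Suc q)
  have "y (n + int (p * Suc q)) = y (n + int (p * q) + int p)" by (simp add: algebra_simps)
  also have "\<dots> = y (n + int (p * q))" using assms by blast
  finally show ?case using Suc by simp
qed

lemma shiftZ_shiftZ: "shiftZ j (shiftZ c y) = shiftZ (j + c) y"
  by (rule ext) (simp add: shiftZ_def algebra_simps)

lemma fst_Tpow: "fst (Tpow j \<omega>) = shiftZ j (fst \<omega>)" and snd_Tpow: "snd (Tpow j \<omega>) = shiftZ j (snd \<omega>)"
  by (simp_all add: Tpow_def)

theorem proposition3p41:
  fixes \<theta> :: "'a::finite \<Rightarrow> 'a list"
    and X' :: "(int \<Rightarrow> 'b::finite) set"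
    and p :: nat
    and \<rho> :: "((int \<Rightarrow> 'a) \<times> (int \<Rightarrow> 'b)) measure"
    and f :: "(int \<Rightarrow> 'a) \<times> (int \<Rightarrow> 'b) \<Rightarrow> real"
    and u :: "'a list"
  assumes subst: "is_substitution \<theta>"
    and prim: "primitive_subst \<theta>"
    and per: "periodic_subshift p X'"
    and space_rho: "space \<rho> = subst_subshift \<theta> \<times> X'"
    and sets_rho: "sets \<rho> = cyl_sigma (subst_subshift \<theta>) X'"
    and erg: "ergodic \<rho> (Tpow 1)"
    and loc: "\<exists>n k g. \<forall>x\<in>subst_subshift \<theta>. \<forall>x'\<in>X'.
                f (x, x') = g (window x n (n + int k - 1)) x'"
    and u_lang: "u \<in> lang (subst_subshift \<theta>)"
    and u_ind: "ind (subst_subshift \<theta>) u > 3"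
    and u_div: "infinite {m. p dvd length (subst_pow \<theta> m u)}"
  shows "AE \<omega> in \<rho>. \<not> (\<exists>E. has_eigenvalue (\<lambda>j. f (Tpow j \<omega>)) E)"
proof -
  define X where "X = subst_subshift \<theta>"
  from loc obtain c0 k0 g where fg: "\<And>x x'. x \<in> X \<Longrightarrow> x' \<in> X' \<Longrightarrow> f (x, x') = g (window x c0 (c0 + int k0 - 1)) x'"
    unfolding X_def by blast
  from cube_in_lang[OF u_lang u_ind] obtain m1 a1 where une: "u \<noteq> []"
    and w0s: "sublist (u @ u @ u @ [hd u]) (subst_pow \<theta> m1 [a1])" by blast
  define w0 where "w0 = u @ u @ u @ [hd u]"
  obtain M where Mw: "\<And>b. sublist w0 (subst_pow \<theta> M [b])"
    using uniform_occ[OF subst prim w0s] unfolding w0_def by blast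
  obtain K where K: "K \<ge> 1" "\<And>a b n. length (subst_pow \<theta> n [a]) \<le> K * length (subst_pow \<theta> n [b])"
    using ratio_bound[OF subst prim] by blast
  from per obtain y where pp: "p > 0" "\<forall>n. y (n + int p) = y n" and X'_def: "X' = {shiftZ j y | j. True}"
    unfolding periodic_subshift_def by blast
  have ps: "prob_space \<rho>" and mp: "measure_preserving_map \<rho> (Tpow 1)"
    and erg0: "\<And>A. A \<in> sets \<rho> \<Longrightarrow> Tpow 1 -` A \<inter> space \<rho> = A \<Longrightarrow> emeasure \<rho> A = 0 \<or> emeasure \<rho> A = 1"
    using erg unfolding ergodic_def by blast+
  interpret P: prob_space \<rho> by (rule ps)
  have Tmeas: "Tpow 1 \<in> \<rho> \<rightarrow>\<^sub>M \<rho>" and Tpres: "\<And>A. A \<in> sets \<rho> \<Longrightarrow> emeasure \<rho> (Tpow 1 -` A \<inter> space \<rho>) = emeasure \<rho> A"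
    using mp unfolding measure_preserving_map_def by blast+
  from u_lang obtain x0 where x0: "x0 \<in> X" unfolding lang_def X_def by blast
  define L where "L n = length (subst_pow \<theta> n u)" for n
  define e where "e n = length (subst_pow \<theta> n [hd u])" for n
  define B where "B = nat \<bar>c0\<bar> + k0 + 1"
  have uhd: "u = [hd u] @ tl u" using une by simp
  have spu: "subst_pow \<theta> n u = subst_pow \<theta> n [hd u] @ subst_pow \<theta> n (tl u)" for n
    using sp_append[of \<theta> n "[hd u]" "tl u"] uhd by simp
  have eL: "e n \<le> L n" for n unfolding e_def L_def using spu[of n] by simp
  have Le: "L n \<le> length u * (K * e n)" for n
  proof -
    have "L n = sum_list (map (\<lambda>a. length (subst_pow \<theta> n [a])) u)" unfolding L_def by (rule sp_len)
    also have "\<dots> \<le> length u * (K * e n)" unfolding e_def by (rule sum_list_bound) (rule K(2))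
    finally show ?thesis .
  qed
  have grow: "\<exists>n0. \<forall>n\<ge>n0. e n \<ge> C" for C
    using growth[OF subst K x0[unfolded X_def], of C] unfolding e_def by blast
  define good where "good \<omega> j n \<longleftrightarrow> (\<forall>i. j - int (L n) - int B \<le> i \<and> i \<le> j + int (L n) + int B \<longrightarrow>
      fst \<omega> i = fst \<omega> (i + int (L n)))" for \<omega> :: "(int \<Rightarrow> 'a) \<times> (int \<Rightarrow> 'b)" and j n
  define Gd where "Gd j n = {\<omega> \<in> space \<rho>. good \<omega> j n}" for j n

  have cyl: "{\<omega> \<in> space \<rho>. fst \<omega> i = a} \<in> sets \<rho>" for i a
  proof -
    have "{\<omega> \<in> space \<rho>. fst \<omega> i = a} = {\<omega> \<in> subst_subshift \<theta> \<times> X'. fst \<omega> i = a}" using space_rho by simp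
    also have "\<dots> \<in> cyl_sigma (subst_subshift \<theta>) X'" unfolding cyl_sigma_def
      by (rule sigma_sets.Basic) blast
    finally show ?thesis using sets_rho by simp
  qed
  have pair_meas: "{\<omega> \<in> space \<rho>. fst \<omega> i = fst \<omega> i'} \<in> sets \<rho>" for i i'
  proof -
    have "{\<omega> \<in> space \<rho>. fst \<omega> i = fst \<omega> i'} = {\<omega> \<in> space \<rho>. \<exists>a\<in>UNIV. fst \<omega> i' = a \<and> fst \<omega> i = a}" by auto
    also have "\<dots> \<in> sets \<rho>"
      by (intro sets.sets_Collect_finite_Ex sets.sets_Collect_conj cyl) auto
    finally show ?thesis .
  qed
  have Gd_meas: "Gd j n \<in> sets \<rho>" for j n
  proof -
    have "Gd j n = {\<omega> \<in> space \<rho>. \<forall>i\<in>{j - int (L n) - int B .. j + int (L n) + int B}. fst \<omega> i = fst \<omega> (i + int (L n))}"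
      unfolding Gd_def good_def by auto
    also have "\<dots> \<in> sets \<rho>"
      by (intro sets.sets_Collect_finite_All' pair_meas) auto
    finally show ?thesis .
  qed

  have Tsp: "Tpow 1 \<omega> \<in> space \<rho>" if "\<omega> \<in> space \<rho>" for \<omega>
    using measurable_space[OF Tmeas that] .
  have good_shift: "good (Tpow 1 \<omega>) j n \<longleftrightarrow> good \<omega> (j + 1) n" for \<omega> j n
  proof
    assume a: "good (Tpow 1 \<omega>) j n"
    show "good \<omega> (j + 1) n" unfolding good_def
    proof (intro allI impI)
      fix i assume i: "j + 1 - int (L n) - int B \<le> i \<and> i \<le> j + 1 + int (L n) + int B"
      have "fst (Tpow 1 \<omega>) (i - 1) = fst (Tpow 1 \<omega>) (i - 1 + int (L n))"
        using a i unfolding good_def by auto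
      thus "fst \<omega> i = fst \<omega> (i + int (L n))" by (simp add: fst_Tpow shiftZ_def algebra_simps)
    qed
  next
    assume a: "good \<omega> (j + 1) n"
    show "good (Tpow 1 \<omega>) j n" unfolding good_def
    proof (intro allI impI)
      fix i assume i: "j - int (L n) - int B \<le> i \<and> i \<le> j + int (L n) + int B"
      have "fst \<omega> (i + 1) = fst \<omega> (i + 1 + int (L n))"
        using a i unfolding good_def by auto
      thus "fst (Tpow 1 \<omega>) i = fst (Tpow 1 \<omega>) (i + int (L n))" by (simp add: fst_Tpow shiftZ_def algebra_simps)
    qed
  qed
  have pre: "Tpow 1 -` Gd j n \<inter> space \<rho> = Gd (j + 1) n" for j n
    unfolding Gd_def using Tsp good_shift by auto
  have meq: "measure \<rho> (Gd (int r) n) = measure \<rho> (Gd 0 n)" for r n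
  proof (induction r)
    case 0 then show ?case by simp
  next
    case (Suc r)
    have "emeasure \<rho> (Gd (int r + 1) n) = emeasure \<rho> (Gd (int r) n)"
      using Tpres[OF Gd_meas[of "int r" n]] pre[of "int r" n] by simp
    hence "measure \<rho> (Gd (int r + 1) n) = measure \<rho> (Gd (int r) n)" unfolding measure_def by (rule arg_cong)
    moreover have "int (Suc r) = int r + 1" by simp
    ultimately show ?case using Suc by metis
  qed

  define CM where "CM = (\<Sum>c\<in>UNIV. length (subst_pow \<theta> M [c]))"
  define Q where "Q = CM * K"
  define PP where "PP = (2 * Q + 1) * length u * K"
  define Mc where "Mc = 2 * PP + 3"
  have CM1: "CM \<ge> 1" using member_le_sum[of undefined UNIV "\<lambda>c. length (subst_pow \<theta> M [c])"] sp_single_pos[OF subst, of M undefined]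
    unfolding CM_def by simp
  have Q1: "Q \<ge> 1" unfolding Q_def using CM1 K(1) by simp
  have Dbound: "length (subst_pow \<theta> (n + M) [b]) \<le> Q * L n" for n b
  proof -
    have "length (subst_pow \<theta> (n + M) [b]) = sum_list (map (\<lambda>a. length (subst_pow \<theta> n [a])) (subst_pow \<theta> M [b]))"
      unfolding sp_add by (rule sp_len)
    also have "\<dots> \<le> length (subst_pow \<theta> M [b]) * (K * e n)" unfolding e_def by (rule sum_list_bound) (rule K(2))
    also have "\<dots> \<le> CM * (K * e n)" unfolding CM_def by (intro mult_right_mono member_le_sum) auto
    also have "\<dots> \<le> CM * (K * L n)" using eL[of n] by simp
    finally show ?thesis unfolding Q_def by (simp add: ac_simps)
  qed
  obtain nA where nA: "\<And>n. n \<ge> nA \<Longrightarrow> e n \<ge> 4 * B + 2" using grow[of "4 * B + 2"] by blast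
  have cover: "\<exists>r\<le>Mc. \<omega> \<in> Gd (int (r * (e n - 2 * B))) n" if n: "n \<ge> nA" and om: "\<omega> \<in> space \<rho>" for n \<omega>
  proof -
    obtain x x' where om': "\<omega> = (x, x')" by (cases \<omega>)
    have x: "x \<in> subst_subshift \<theta>" using om om' space_rho by auto
    define h where "h = e n - 2 * B"
    have en: "e n \<ge> 4 * B + 2" using nA n by blast
    have h1: "h \<ge> 1" and h2: "e n \<le> 2 * h" using en unfolding h_def by auto
    have Ln: "L n \<ge> 1" using eL[of n] en by linarith
    define D where "D = Q * L n"
    have D1: "D \<ge> 1" using Q1 Ln by (simp add: D_def Suc_le_eq)
    have "\<exists>t. 0 \<le> t \<and> t + int (length (subst_pow \<theta> n w0)) \<le> 0 + 2 * int D \<and>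
           (\<forall>i < length (subst_pow \<theta> n w0). x (t + int i) = subst_pow \<theta> n w0 ! i)"
      by (rule covering[OF subst x Mw]) (use Dbound D_def D1 in auto)
    then obtain t where t: "0 \<le> t" "t + int (length (subst_pow \<theta> n w0)) \<le> 2 * int D"
      "\<And>i. i < length (subst_pow \<theta> n w0) \<Longrightarrow> x (t + int i) = subst_pow \<theta> n w0 ! i" by auto
    define V where "V = subst_pow \<theta> n u"
    define Y where "Y = subst_pow \<theta> n [hd u]"
    define T where "T = subst_pow \<theta> n (tl u)"
    have VYT: "V = Y @ T" unfolding V_def Y_def T_def by (rule spu)
    have spw: "subst_pow \<theta> n w0 = V @ V @ V @ Y" unfolding w0_def V_def Y_def by (simp add: sp_append)
    have w0eq: "subst_pow \<theta> n w0 = (V @ V @ Y) @ (T @ Y)" using spw VYT by simp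
    have w0eq2: "subst_pow \<theta> n w0 = V @ (V @ V @ Y)" using spw by simp
    have lV: "length V = L n" and lY: "length Y = e n" unfolding V_def Y_def L_def e_def by simp_all
    have lw: "length (subst_pow \<theta> n w0) = 3 * L n + e n" using spw lV lY by simp
    have xper: "x (t + int i) = x (t + int i + int (L n))" if i: "i < 2 * L n + e n" for i
    proof -
      have "x (t + int i) = subst_pow \<theta> n w0 ! i" using t(3)[of i] i lw by simp
      also have "\<dots> = (V @ V @ Y) ! i" unfolding w0eq using i lV lY by (simp add: nth_append)
      also have "\<dots> = subst_pow \<theta> n w0 ! (L n + i)" unfolding w0eq2 using lV by (simp add: nth_append)
      also have "\<dots> = x (t + int (L n + i))" using t(3)[of "L n + i"] i lw by simp
      finally show ?thesis by (simp add: algebra_simps)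
    qed
    define a where "a = nat t + L n + B"
    define r where "r = (a + h - 1) div h"
    have dm: "(a + h - 1) div h * h + (a + h - 1) mod h = a + h - 1" by (rule div_mult_mod_eq)
    have mh: "(a + h - 1) mod h < h" using h1 by simp
    have ra: "a \<le> r * h" using dm mh h1 unfolding r_def by linarith
    have rb: "r * h \<le> a + h - 1" using dm unfolding r_def by linarith
    have tD: "nat t \<le> 2 * D" using t(2) t(1) by (simp add: nat_le_iff)
    have aP: "a \<le> (PP + 1) * e n"
    proof -
      have "a \<le> (2 * Q + 1) * L n + B" unfolding a_def D_def using tD D_def by (simp add: algebra_simps)
      also have "(2 * Q + 1) * L n \<le> (2 * Q + 1) * (length u * (K * e n))" using Le[of n] by (rule mult_le_mono2)
      also have "\<dots> = PP * e n" unfolding PP_def by (simp only: mult.assoc mult.commute mult.left_commute)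
      finally show ?thesis using en by simp
    qed
    have McH: "(PP + 1) * e n \<le> Mc * h"
    proof -
      have "(PP + 1) * e n \<le> (PP + 1) * (2 * h)" using h2 by (rule mult_le_mono2)
      also have "\<dots> \<le> Mc * h" unfolding Mc_def by (simp add: algebra_simps)
      finally show ?thesis .
    qed
    have rM: "r \<le> Mc"
    proof (rule ccontr)
      assume "\<not> r \<le> Mc"
      hence "(Mc + 1) * h \<le> r * h" by (intro mult_le_mono1) simp
      hence "Mc * h + h \<le> a + h - 1" using rb by (simp add: algebra_simps)
      hence "Mc * h < a" using h1 by linarith
      thus False using aP McH by linarith
    qed
    have "good \<omega> (int (r * h)) n" unfolding good_def
    proof (intro allI impI)
      fix i assume i: "int (r * h) - int (L n) - int B \<le> i \<and> i \<le> int (r * h) + int (L n) + int B"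
      define d where "d = nat (i - t)"
      have ta: "int a = t + int (L n) + int B" unfolding a_def using t(1) by simp
      have ra': "int a \<le> int (r * h)" using ra by linarith
      have rb': "int (r * h) \<le> int a + int h - 1" using rb h1 by linarith
      have hB: "int h + 2 * int B = int (e n)" unfolding h_def using en by simp
      have d0: "i - t \<ge> 0" using i ra' ta by linarith
      have id: "i = t + int d" unfolding d_def using d0 by simp
      have dlt: "d < 2 * L n + e n" unfolding d_def using i rb' ta hB d0 by linarith
      have "x i = x (i + int (L n))" using xper[OF dlt] id by simp
      thus "fst \<omega> i = fst \<omega> (i + int (L n))" using om' by simp
    qed
    thus ?thesis using rM om unfolding Gd_def h_def by blast
  qed
  have lower: "measure \<rho> (Gd 0 n) \<ge> 1 / (real Mc + 1)" if n: "n \<ge> nA" for n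
  proof -
    define h where "h = e n - 2 * B"
    have "space \<rho> \<subseteq> (\<Union>r\<in>{..Mc}. Gd (int (r * h)) n)" using cover[OF n] unfolding h_def by blast
    hence "measure \<rho> (space \<rho>) \<le> measure \<rho> (\<Union>r\<in>{..Mc}. Gd (int (r * h)) n)"
      by (intro P.finite_measure_mono) (auto intro: Gd_meas)
    also have "\<dots> \<le> (\<Sum>r\<in>{..Mc}. measure \<rho> (Gd (int (r * h)) n))"
      by (rule measure_UNION_le) (auto intro: Gd_meas)
    also have "\<dots> = (\<Sum>r\<in>{..Mc}. measure \<rho> (Gd 0 n))" by (rule sum.cong[OF refl]) (rule meq)
    also have "\<dots> = (real Mc + 1) * measure \<rho> (Gd 0 n)" by simp
    finally have "1 \<le> (real Mc + 1) * measure \<rho> (Gd 0 n)" by (simp add: P.prob_space)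
    thus ?thesis by (simp add: field_simps)
  qed
  define c where "c = 1 / (real Mc + 1)"
  have c0: "c > 0" unfolding c_def by simp
  define Nset where "Nset = {m. p dvd length (subst_pow \<theta> m u)}"
  have Ninf: "\<exists>n\<in>Nset. m \<le> n" for m
    using u_div unfolding Nset_def infinite_nat_iff_unbounded_le by blast
  define G where "G = {\<omega> \<in> space \<rho>. \<exists>j::int. \<forall>m::nat. \<exists>n::nat. (m \<le> n \<and> n \<in> Nset) \<and> good \<omega> j n}"
  have inner: "{\<omega> \<in> space \<rho>. (m \<le> n \<and> n \<in> Nset) \<and> good \<omega> j n} \<in> sets \<rho>" for m n j
  proof (cases "m \<le> n \<and> n \<in> Nset")
    case True
    then have eq: "{\<omega> \<in> space \<rho>. (m \<le> n \<and> n \<in> Nset) \<and> good \<omega> j n} = Gd j n" unfolding Gd_def by auto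
    show ?thesis unfolding eq by (rule Gd_meas)
  next
    case False
    then have eq: "{\<omega> \<in> space \<rho>. (m \<le> n \<and> n \<in> Nset) \<and> good \<omega> j n} = {}" by auto
    show ?thesis unfolding eq by (rule sets.empty_sets)
  qed
  have inner2: "{\<omega> \<in> space \<rho>. \<forall>m::nat. \<exists>n::nat. (m \<le> n \<and> n \<in> Nset) \<and> good \<omega> j n} \<in> sets \<rho>" for j
  proof (rule sets.sets_Collect_countable_All[where P="\<lambda>m \<omega>. \<exists>n::nat. (m \<le> n \<and> n \<in> Nset) \<and> good \<omega> j n"])
    fix m :: nat
    show "{\<omega> \<in> space \<rho>. \<exists>n::nat. (m \<le> n \<and> n \<in> Nset) \<and> good \<omega> j n} \<in> sets \<rho>"
      by (rule sets.sets_Collect_countable_Ex[where P="\<lambda>n \<omega>. (m \<le> n \<and> n \<in> Nset) \<and> good \<omega> j n"]) (rule inner)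
  qed
  have G_meas: "G \<in> sets \<rho>" unfolding G_def
    by (rule sets.sets_Collect_countable_Ex[where P="\<lambda>j \<omega>. \<forall>m::nat. \<exists>n::nat. (m \<le> n \<and> n \<in> Nset) \<and> good \<omega> j n"]) (rule inner2)
  have G_inv: "Tpow 1 -` G \<inter> space \<rho> = G"
  proof (intro set_eqI iffI)
    fix \<omega> assume "\<omega> \<in> Tpow 1 -` G \<inter> space \<rho>"
    then obtain j where om: "\<omega> \<in> space \<rho>" and j: "\<forall>m. \<exists>n. (m \<le> n \<and> n \<in> Nset) \<and> good (Tpow 1 \<omega>) j n"
      unfolding G_def by auto
    hence "\<forall>m. \<exists>n. (m \<le> n \<and> n \<in> Nset) \<and> good \<omega> (j + 1) n" using good_shift by blast
    thus "\<omega> \<in> G" using om unfolding G_def by blast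
  next
    fix \<omega> assume "\<omega> \<in> G"
    then obtain j where om: "\<omega> \<in> space \<rho>" and j: "\<forall>m. \<exists>n. (m \<le> n \<and> n \<in> Nset) \<and> good \<omega> j n"
      unfolding G_def by auto
    hence "\<forall>m. \<exists>n. (m \<le> n \<and> n \<in> Nset) \<and> good (Tpow 1 \<omega>) (j - 1) n" using good_shift by simp
    thus "\<omega> \<in> Tpow 1 -` G \<inter> space \<rho>" using om Tsp[OF om] unfolding G_def by blast
  qed
  define Bm where "Bm m = {\<omega> \<in> space \<rho>. \<exists>n. (m \<le> n \<and> n \<in> Nset) \<and> good \<omega> 0 n}" for m
  have Bm_meas: "Bm m \<in> sets \<rho>" for m unfolding Bm_def
    by (rule sets.sets_Collect_countable_Ex[where P="\<lambda>n \<omega>. (m \<le> n \<and> n \<in> Nset) \<and> good \<omega> 0 n"]) (rule inner)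
  have Bm_dec: "decseq Bm" unfolding decseq_def Bm_def by (blast intro: order_trans)
  have Bm_low: "c \<le> measure \<rho> (Bm m)" for m
  proof -
    obtain n where n: "n \<in> Nset" "max m nA \<le> n" using Ninf by blast
    have "Gd 0 n \<subseteq> Bm m" unfolding Gd_def Bm_def using n by auto
    hence "measure \<rho> (Gd 0 n) \<le> measure \<rho> (Bm m)" by (intro P.finite_measure_mono Bm_meas)
    moreover have "c \<le> measure \<rho> (Gd 0 n)" unfolding c_def using lower n by simp
    ultimately show ?thesis by linarith
  qed
  have lim: "(\<lambda>m. measure \<rho> (Bm m)) \<longlonglongrightarrow> measure \<rho> (\<Inter>m. Bm m)"
    by (rule P.finite_Lim_measure_decseq) (use Bm_meas Bm_dec in auto)
  have cI: "c \<le> measure \<rho> (\<Inter>m. Bm m)"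
    by (rule LIMSEQ_le_const[OF lim]) (use Bm_low in auto)
  have IG: "(\<Inter>m. Bm m) \<subseteq> G" unfolding Bm_def G_def by blast
  have "measure \<rho> (\<Inter>m. Bm m) \<le> measure \<rho> G" by (rule P.finite_measure_mono[OF IG G_meas])
  hence mG: "measure \<rho> G > 0" using cI c0 by linarith
  have "emeasure \<rho> G = 1"
  proof -
    have "emeasure \<rho> G = 0 \<or> emeasure \<rho> G = 1" by (rule erg0[OF G_meas G_inv])
    moreover have "emeasure \<rho> G \<noteq> 0" using mG by (auto simp: measure_def)
    ultimately show ?thesis by blast
  qed
  hence "measure \<rho> G = 1" by (simp add: measure_def)
  hence AEG: "AE \<omega> in \<rho>. \<omega> \<in> G" using P.AE_in_set_eq_1[OF G_meas] by simp
  have noeig: "\<not> (\<exists>E. has_eigenvalue (\<lambda>j. f (Tpow j \<omega>)) E)" if oG: "\<omega> \<in> G" for \<omega>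
  proof
    assume ex: "\<exists>E. has_eigenvalue (\<lambda>j. f (Tpow j \<omega>)) E"
    from oG obtain j0 where om: "\<omega> \<in> space \<rho>" and jg: "\<forall>m. \<exists>n. (m \<le> n \<and> n \<in> Nset) \<and> good \<omega> j0 n"
      unfolding G_def by blast
    obtain x x' where om': "\<omega> = (x, x')" by (cases \<omega>)
    have x: "x \<in> X" and x': "x' \<in> X'" using om om' space_rho X_def by auto
    from x' obtain cy where cy: "x' = shiftZ cy y" unfolding X'_def by blast
    define V where "V j = f (Tpow j \<omega>)" for j
    from ex obtain E \<psi> where sm: "(\<lambda>n. (cmod (\<psi> n))\<^sup>2) summable_on UNIV" and nz: "\<psi> \<noteq> (\<lambda>_. 0)"
      and eq: "\<And>n. \<psi> (n + 1) + \<psi> (n - 1) + complex_of_real (V n) * \<psi> n = E * \<psi> n"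
      unfolding has_eigenvalue_def V_def by blast
    define W where "W j = E - complex_of_real (V j)" for j
    have rec: "\<psi> (n + 1) = W n * \<psi> n - \<psi> (n - 1)" for n
    proof -
      have "\<psi> (n + 1) = (\<psi> (n + 1) + \<psi> (n - 1) + complex_of_real (V n) * \<psi> n) - \<psi> (n - 1) - complex_of_real (V n) * \<psi> n"
        by simp
      also have "\<dots> = E * \<psi> n - \<psi> (n - 1) - complex_of_real (V n) * \<psi> n" by (simp only: eq)
      also have "\<dots> = W n * \<psi> n - \<psi> (n - 1)" unfolding W_def by (simp add: algebra_simps)
      finally show ?thesis .
    qed
    have Vform: "V j = g (window (shiftZ j x) c0 (c0 + int k0 - 1)) (shiftZ j x')" for j
    proof -
      have "shiftZ j x \<in> X" using subshift_shift x unfolding X_def by blast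
      moreover have "shiftZ j x' \<in> X'" unfolding X'_def cy shiftZ_shiftZ by blast
      ultimately show ?thesis unfolding V_def om' Tpow_def by (simp add: fg)
    qed
    have Vper: "V (j + int (L n)) = V j"
      if gn: "good \<omega> j0 n" and nN: "n \<in> Nset" and j1: "j0 - int (L n) \<le> j" and j2: "j < j0 + int (L n)" for n j
    proof -
      have w: "window (shiftZ (j + int (L n)) x) c0 (c0 + int k0 - 1) = window (shiftZ j x) c0 (c0 + int k0 - 1)"
        unfolding window_shift
      proof (rule nth_equalityI)
        fix i assume "i < length (window x (c0 + (j + int (L n))) (c0 + int k0 - 1 + (j + int (L n))))"
        hence i: "i < k0" by simp
        have lo: "j0 - int (L n) - int B \<le> c0 + j + int i" unfolding B_def using j1 by linarith
        have hi: "c0 + j + int i \<le> j0 + int (L n) + int B" unfolding B_def using j2 i by linarith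
        have "fst \<omega> (c0 + j + int i) = fst \<omega> (c0 + j + int i + int (L n))"
          using gn lo hi unfolding good_def by blast
        hence "x (c0 + j + int i) = x (c0 + j + int i + int (L n))" using om' by simp
        thus "window x (c0 + (j + int (L n))) (c0 + int k0 - 1 + (j + int (L n))) ! i =
              window x (c0 + j) (c0 + int k0 - 1 + j) ! i"
          using i by (simp add: window_nth algebra_simps)
      qed simp
      obtain q where q: "L n = p * q" using nN unfolding Nset_def L_def by (auto elim: dvdE)
      have s: "shiftZ (j + int (L n)) x' = shiftZ j x'"
      proof (rule ext)
        fix t
        have "y (t + j + cy + int (p * q)) = y (t + j + cy)" by (rule per_mult[OF pp(2)])
        thus "shiftZ (j + int (L n)) x' t = shiftZ j x' t" unfolding cy shiftZ_def q by (simp add: algebra_simps)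
      qed
      show ?thesis unfolding Vform w s ..
    qed
    have perW: "\<exists>Lq::nat. Lq \<ge> N \<and> (\<forall>j. j0 - int Lq \<le> j \<and> j < j0 + int Lq \<longrightarrow> W (j + int Lq) = W j)" for N
    proof -
      obtain nB where nB: "\<And>n. n \<ge> nB \<Longrightarrow> e n \<ge> N" using grow[of N] by blast
      obtain n where n: "nB \<le> n" "n \<in> Nset" "good \<omega> j0 n" using jg by blast
      have "L n \<ge> N" using nB[OF n(1)] eL[of n] by linarith
      moreover have "\<forall>j. j0 - int (L n) \<le> j \<and> j < j0 + int (L n) \<longrightarrow> W (j + int (L n)) = W j"
        unfolding W_def using Vper[OF n(3) n(2)] by auto
      ultimately show ?thesis by blast
    qed
    have z: "\<psi> j0 = 0 \<and> \<psi> (j0 - 1) = 0"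
      by (rule gordon_abstract[OF rec l2_decay[OF sm] perW])
    have "\<psi> j = 0" for j using propagate_zero[OF rec] z by blast
    thus False using nz by auto
  qed
  show ?thesis using AEG by (rule eventually_mono) (rule noeig)
qed


end
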